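(* Let $G=(V,E)$ be a finite simple graph and let $F$ be any finite field. Let $L$ be its connection matrix and $|H|$ its sign-less Hodge Laplacian, both regarded as matrices over $F$ via the canonical ring homomorphism $\mathbb{Z}\to F$. Then $L$ is invertible over $F$ and $|H|=L-L^{-1}$ holds over $F$. In particular, the map $\psi\mapsto L\psi$ is a bijection of the finite set $F^X$ of $F$-valued functions on the simplices, and the two-sided orbit $n\mapsto L^n\psi$, $n\in\mathbb{Z}$, is well defined.
   Context: Let $G=(V,E)$ be a finite simple graph. Its associated $1$-dimensional simplicial complex is the set of simplices $X=\{\{v\}: v\in V\}\cup E$, where each edge is regarded as a $2$-element subset of $V$; matrices are indexed by $X$. The connection matrix $L$ has $L(x,y)=1$ if $x\cap y\neq\emptyset$ and $L(x,y)=0$ otherwise. The sign-less exterior derivative $|d|$ has $|d|(x,y)=1$ if $y\subset x$ and $|x|=|y|+1$, and $0$ otherwise; the sign-less Hodge Laplacian is $|H|=(|d|+|d|^T)^2$. *)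

theory Defs
  imports "HOL-Library.FuncSet"
begin

definition simple_graph :: "'v set \<Rightarrow> 'v set set \<Rightarrow> bool" where
  "simple_graph V E \<longleftrightarrow> finite V \<and> (\<forall>e\<in>E. e \<subseteq> V \<and> card e = 2)"

definition simplices :: "'v set \<Rightarrow> 'v set set \<Rightarrow> 'v set set" where
  "simplices V E = {{v} | v. v \<in> V} \<union> E"

text \<open>Matrices indexed by simplices, with entries in a ring; only entries on X \<times> X matter.\<close>
type_synonym ('v, 'a) smat = "'v set \<Rightarrow> 'v set \<Rightarrow> 'a"

definition smat_mult :: "'v set set \<Rightarrow> ('v,'a::comm_ring_1) smat \<Rightarrow> ('v,'a) smat \<Rightarrow> ('v,'a) smat" where
  "smat_mult X A B = (\<lambda>x y. \<Sum>z\<in>X. A x z * B z y)"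

definition smat_one :: "('v,'a::comm_ring_1) smat" where
  "smat_one = (\<lambda>x y. if x = y then 1 else 0)"

definition smat_add :: "('v,'a::comm_ring_1) smat \<Rightarrow> ('v,'a) smat \<Rightarrow> ('v,'a) smat" where
  "smat_add A B = (\<lambda>x y. A x y + B x y)"

definition smat_transpose :: "('v,'a) smat \<Rightarrow> ('v,'a) smat" where
  "smat_transpose A = (\<lambda>x y. A y x)"

definition connection_matrix :: "('v,'a::comm_ring_1) smat" where
  "connection_matrix = (\<lambda>x y. of_int (if x \<inter> y \<noteq> {} then 1 else 0))"

definition signless_d :: "('v,'a::comm_ring_1) smat" where
  "signless_d = (\<lambda>x y. of_int (if y \<subset> x \<and> card x = card y + 1 then 1 else 0))"

definition signless_hodge :: "'v set set \<Rightarrow> ('v,'a::comm_ring_1) smat" where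
  "signless_hodge X =
     (let D = smat_add signless_d (smat_transpose signless_d) in smat_mult X D D)"

definition smat_inverse_on :: "'v set set \<Rightarrow> ('v,'a::comm_ring_1) smat \<Rightarrow> ('v,'a) smat \<Rightarrow> bool" where
  "smat_inverse_on X A B \<longleftrightarrow>
     (\<forall>x\<in>X. \<forall>y\<in>X. smat_mult X A B x y = smat_one x y \<and> smat_mult X B A x y = smat_one x y)"

definition smat_apply :: "'v set set \<Rightarrow> ('v,'a::comm_ring_1) smat \<Rightarrow> ('v set \<Rightarrow> 'a) \<Rightarrow> ('v set \<Rightarrow> 'a)" where
  "smat_apply X A \<psi> = (\<lambda>x\<in>X. \<Sum>y\<in>X. A x y * \<psi> y)"

end

theory Submission
  imports Defs
begin

definition Dm :: "('v,'a::comm_ring_1) smat" where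
 "Dm = smat_add signless_d (smat_transpose signless_d)"

lemma hodge_eq: "signless_hodge X = smat_mult X Dm Dm"
  by (simp add: signless_hodge_def Dm_def Let_def)

definition Mm :: "'v set set \<Rightarrow> ('v,'a::comm_ring_1) smat" where
  "Mm X = (\<lambda>x y. connection_matrix x y - signless_hodge X x y)"

lemma L_vv: "(connection_matrix::('v,'a::comm_ring_1) smat) {v} {w} = (if v = w then 1 else 0)"
  by (auto simp: connection_matrix_def)
lemma L_ve: "(connection_matrix::('v,'a::comm_ring_1) smat) {v} e = (if v \<in> e then 1 else 0)"
  by (auto simp: connection_matrix_def)
lemma L_ev: "(connection_matrix::('v,'a::comm_ring_1) smat) e {v} = (if v \<in> e then 1 else 0)"
  by (auto simp: connection_matrix_def)
lemma L_ee: "(connection_matrix::('v,'a::comm_ring_1) smat) e f = (if e \<inter> f \<noteq> {} then 1 else 0)"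
  by (auto simp: connection_matrix_def)

context
  fixes V :: "'v set" and E :: "'v set set"
  assumes G: "simple_graph V E"
begin

lemma finV: "finite V" using G by (simp add: simple_graph_def)
lemma Esub: "e \<in> E \<Longrightarrow> e \<subseteq> V" using G by (simp add: simple_graph_def)
lemma Ecard: "e \<in> E \<Longrightarrow> card e = 2" using G by (simp add: simple_graph_def)
lemma finE: "finite E"
proof -
  have "E \<subseteq> Pow V" using Esub by auto
  thus ?thesis using finV finite_subset by blast
qed
lemma Efin: "e \<in> E \<Longrightarrow> finite e" using Ecard by (metis card.infinite zero_neq_numeral)
lemma sing_notE: "{v} \<notin> E" using Ecard by fastforce

lemma sumX: "(\<Sum>z\<in>simplices V E. f z) = (\<Sum>v\<in>V. f {v}) + (\<Sum>e\<in>E. f e)"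
proof -
  have X: "simplices V E = (\<lambda>v. {v}) ` V \<union> E" by (auto simp: simplices_def)
  have "(\<Sum>z\<in>simplices V E. f z) = (\<Sum>z\<in>(\<lambda>v. {v}) ` V. f z) + (\<Sum>e\<in>E. f e)"
    unfolding X by (rule sum.union_disjoint) (use finV finE sing_notE in auto)
  also have "(\<Sum>z\<in>(\<lambda>v. {v}) ` V. f z) = (\<Sum>v\<in>V. f {v})"
    by (subst sum.reindex) (auto simp: inj_on_def)
  finally show ?thesis .
qed

lemma X_cases: "x \<in> simplices V E \<Longrightarrow> (\<And>v. v \<in> V \<Longrightarrow> x = {v} \<Longrightarrow> P) \<Longrightarrow> (x \<in> E \<Longrightarrow> P) \<Longrightarrow> P"
  by (auto simp: simplices_def)

lemma D_vv: "(Dm::('v,'a::comm_ring_1) smat) {v} {w} = 0"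
  by (simp add: Dm_def smat_add_def smat_transpose_def signless_d_def)

lemma sub_sing: "e \<in> E \<Longrightarrow> ({v} \<subset> e) = (v \<in> e)"
  using Ecard[of e] by auto

lemma D_ve: "e \<in> E \<Longrightarrow> (Dm::('v,'a::comm_ring_1) smat) {v} e = (if v \<in> e then 1 else 0)"
  using Ecard[of e] sub_sing[of e v]
  by (auto simp: Dm_def smat_add_def smat_transpose_def signless_d_def)

lemma D_ev: "e \<in> E \<Longrightarrow> (Dm::('v,'a::comm_ring_1) smat) e {v} = (if v \<in> e then 1 else 0)"
  using Ecard[of e] sub_sing[of e v]
  by (auto simp: Dm_def smat_add_def smat_transpose_def signless_d_def)

lemma D_ee: "e \<in> E \<Longrightarrow> f \<in> E \<Longrightarrow> (Dm::('v,'a::comm_ring_1) smat) e f = 0"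
  using Ecard[of e] Ecard[of f]
  by (auto simp: Dm_def smat_add_def smat_transpose_def signless_d_def)

abbreviation "XX \<equiv> simplices V E"

lemma H_vv: "v \<in> V \<Longrightarrow> w \<in> V \<Longrightarrow> (signless_hodge XX::('v,'a::comm_ring_1) smat) {v} {w}
   = (\<Sum>f\<in>E. (if v \<in> f then 1 else 0) * (if w \<in> f then 1 else 0))"
  unfolding hodge_eq smat_mult_def sumX
  by (simp add: D_vv D_ve D_ev cong: sum.cong)

lemma H_ve: "g \<in> E \<Longrightarrow> (signless_hodge XX::('v,'a::comm_ring_1) smat) {v} g = 0"
  unfolding hodge_eq smat_mult_def sumX
  by (simp add: D_vv D_ee cong: sum.cong)

lemma H_ev: "g \<in> E \<Longrightarrow> (signless_hodge XX::('v,'a::comm_ring_1) smat) g {v} = 0"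
  unfolding hodge_eq smat_mult_def sumX
  by (simp add: D_vv D_ee cong: sum.cong)

lemma H_ee: "e \<in> E \<Longrightarrow> g \<in> E \<Longrightarrow> (signless_hodge XX::('v,'a::comm_ring_1) smat) e g =
   (\<Sum>u\<in>V. (if u \<in> e then 1 else 0) * (if u \<in> g then 1 else 0))"
  unfolding hodge_eq smat_mult_def sumX
  by (simp add: D_ee D_ve D_ev cong: sum.cong)

lemma card_int: assumes "e \<in> E" "f \<in> E" "e \<noteq> f" shows "card (e \<inter> f) \<le> 1"
proof (rule ccontr)
  assume "\<not> ?thesis"
  hence c: "card (e \<inter> f) = 2"
    using card_mono[OF Efin[OF assms(1)], of "e \<inter> f"] Ecard[OF assms(1)] by auto
  have "e \<inter> f = e" using card_subset_eq[OF Efin[OF assms(1)], of "e \<inter> f"] c Ecard[OF assms(1)] by auto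
  moreover have "e \<inter> f = f" using card_subset_eq[OF Efin[OF assms(2)], of "e \<inter> f"] c Ecard[OF assms(2)] by auto
  ultimately show False using assms(3) by auto
qed

lemma CF: assumes "e \<in> E" "f \<in> E"
  shows "(\<Sum>u\<in>V. (if u \<in> e then 1 else 0) * (if u \<in> f then 1 else 0) :: 'a::comm_ring_1)
     = (if e \<inter> f \<noteq> {} then 1 else 0) + (if e = f then 1 else 0)"
proof -
  have "(\<Sum>u\<in>V. (if u \<in> e then 1 else 0) * (if u \<in> f then 1 else 0) :: 'a)
       = (\<Sum>u\<in>V. if u \<in> e \<inter> f then 1 else 0)" by (rule sum.cong) auto
  also have "\<dots> = of_nat (card (V \<inter> {u. u \<in> e \<inter> f}))" by (simp add: sum.If_cases finV)
  also have "V \<inter> {u. u \<in> e \<inter> f} = e \<inter> f" using Esub[OF assms(1)] by auto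
  finally have s: "(\<Sum>u\<in>V. (if u \<in> e then 1 else 0) * (if u \<in> f then 1 else 0) :: 'a) = of_nat (card (e \<inter> f))" .
  show ?thesis
  proof (cases "e = f")
    case True
    have "e \<noteq> {}" using Ecard[OF assms(1)] by auto
    thus ?thesis using s Ecard[OF assms(1)] True by simp
  next
    case False
    have fin: "finite (e \<inter> f)" using Efin[OF assms(1)] by simp
    have "card (e \<inter> f) = (if e \<inter> f \<noteq> {} then 1 else 0)"
      using card_int[OF assms False] fin card_0_eq[OF fin] by (cases "card (e \<inter> f)") auto
    thus ?thesis using s False by simp
  qed
qed

lemma M_vv: "v \<in> V \<Longrightarrow> w \<in> V \<Longrightarrow> (Mm XX::('v,'a::comm_ring_1) smat) {v} {w}
   = (if v = w then 1 else 0) - (\<Sum>f\<in>E. (if v \<in> f then 1 else 0) * (if w \<in> f then 1 else 0))"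
  by (simp add: Mm_def L_vv H_vv)

lemma M_ve: "g \<in> E \<Longrightarrow> (Mm XX::('v,'a::comm_ring_1) smat) {v} g = (if v \<in> g then 1 else 0)"
  by (simp add: Mm_def L_ve H_ve)

lemma M_ev: "g \<in> E \<Longrightarrow> (Mm XX::('v,'a::comm_ring_1) smat) g {v} = (if v \<in> g then 1 else 0)"
  by (simp add: Mm_def L_ev H_ev)

lemma M_ee: "e \<in> E \<Longrightarrow> g \<in> E \<Longrightarrow> (Mm XX::('v,'a::comm_ring_1) smat) e g = - (if e = g then 1 else 0)"
  by (simp add: Mm_def L_ee H_ee CF)

lemma LM_vv: assumes "v \<in> V" "w \<in> V"
  shows "smat_mult XX connection_matrix (Mm XX) {v} {w} = (if v = w then 1 else (0::'a::comm_ring_1))"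
proof -
  have 1: "(\<Sum>u\<in>V. connection_matrix {v} {u} * Mm XX {u} {w}) = (Mm XX {v} {w} :: 'a)"
    unfolding L_vv by (subst sum.cong[OF refl, of _ _ "\<lambda>u. if v = u then Mm XX {u} {w} else 0"]) (auto simp: finV assms)
  have 2: "(\<Sum>f\<in>E. connection_matrix {v} f * Mm XX f {w}) = (\<Sum>f\<in>E. (if v \<in> f then 1 else 0)*(if w \<in> f then 1 else (0::'a)))"
    by (rule sum.cong) (auto simp: L_ve M_ev)
  show ?thesis unfolding smat_mult_def sumX 1 2 by (simp add: M_vv assms)
qed

lemma LM_ve: assumes "v \<in> V" "g \<in> E"
  shows "smat_mult XX connection_matrix (Mm XX) {v} g = (0::'a::comm_ring_1)"
proof -
  have 1: "(\<Sum>u\<in>V. connection_matrix {v} {u} * Mm XX {u} g) = (Mm XX {v} g :: 'a)"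
    unfolding L_vv by (subst sum.cong[OF refl, of _ _ "\<lambda>u. if v = u then Mm XX {u} g else 0"]) (auto simp: finV assms)
  have 2: "(\<Sum>f\<in>E. connection_matrix {v} f * Mm XX f g) = (\<Sum>f\<in>E. if f = g then - (if v \<in> g then 1 else (0::'a)) else 0)"
    by (rule sum.cong) (auto simp: L_ve M_ee assms)
  show ?thesis unfolding smat_mult_def sumX 1 2 by (simp add: M_ve assms finE)
qed

lemma LM_ev: assumes "e \<in> E" "w \<in> V"
  shows "smat_mult XX connection_matrix (Mm XX) e {w} = (0::'a::comm_ring_1)"
proof -
  define S where "S = (\<Sum>u\<in>V. \<Sum>f\<in>E. (if u \<in> e then 1 else 0) * ((if u \<in> f then 1 else 0) * (if w \<in> f then 1 else (0::'a))))"
  have 1: "(\<Sum>u\<in>V. connection_matrix e {u} * Mm XX {u} {w}) = (\<Sum>u\<in>V. (if u = w then (if w \<in> e then 1 else 0) else 0)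
       - (\<Sum>f\<in>E. (if u \<in> e then 1 else 0) * ((if u \<in> f then 1 else 0) * (if w \<in> f then 1 else (0::'a)))))"
    by (rule sum.cong) (auto simp: L_ev M_vv assms sum_distrib_left right_diff_distrib)
  also have "\<dots> = (if w \<in> e then 1 else 0) - S"
    unfolding S_def sum_subtractf using assms finV by simp
  finally have 1: "(\<Sum>u\<in>V. connection_matrix e {u} * Mm XX {u} {w}) = (if w \<in> e then 1 else 0) - S" .
  have 2: "(\<Sum>f\<in>E. connection_matrix e f * Mm XX f {w}) = (\<Sum>f\<in>E. (\<Sum>u\<in>V. (if u \<in> e then 1 else 0) * ((if u \<in> f then 1 else 0) * (if w \<in> f then 1 else (0::'a))))
        - (if f = e then (if w \<in> e then 1 else 0) else 0))"
  proof (rule sum.cong)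
    fix f assume f: "f \<in> E"
    have "connection_matrix e f * Mm XX f {w} = (((\<Sum>u\<in>V. (if u \<in> e then 1 else 0) * (if u \<in> f then 1 else 0)) - (if e = f then 1 else 0)) * (if w \<in> f then 1 else (0::'a)))"
      using CF[OF assms(1) f, where 'a='a] by (simp add: L_ee M_ev f)
    also have "\<dots> = (\<Sum>u\<in>V. (if u \<in> e then 1 else 0) * ((if u \<in> f then 1 else 0) * (if w \<in> f then 1 else (0::'a))))
        - (if f = e then (if w \<in> e then 1 else 0) else 0)"
      by (auto simp: sum_distrib_right mult.assoc left_diff_distrib)
    finally show "connection_matrix e f * Mm XX f {w} = \<dots>" .
  qed simp
  also have "\<dots> = S - (if w \<in> e then 1 else 0)"
    unfolding S_def sum_subtractf using assms finE by (simp add: sum.swap[of _ V])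
  finally show ?thesis unfolding smat_mult_def sumX 1 by simp
qed

lemma LM_ee: assumes "e \<in> E" "g \<in> E"
  shows "smat_mult XX connection_matrix (Mm XX) e g = (if e = g then 1 else (0::'a::comm_ring_1))"
proof -
  have 1: "(\<Sum>u\<in>V. connection_matrix e {u} * Mm XX {u} g) = (\<Sum>u\<in>V. (if u \<in> e then 1 else 0) * (if u \<in> g then 1 else (0::'a)))"
    by (rule sum.cong) (auto simp: L_ev M_ve assms)
  have 2: "(\<Sum>f\<in>E. connection_matrix e f * Mm XX f g) = (\<Sum>f\<in>E. if f = g then - (if e \<inter> g \<noteq> {} then 1 else (0::'a)) else 0)"
    by (rule sum.cong) (auto simp: L_ee M_ee assms)
  show ?thesis unfolding smat_mult_def sumX 1 2 using CF[OF assms, where 'a='a] assms finE by simp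
qed

lemma LM: assumes "x \<in> XX" "y \<in> XX"
  shows "smat_mult XX connection_matrix (Mm XX) x y = (smat_one x y :: 'a::comm_ring_1)"
  using assms(1)
proof (rule X_cases)
  fix v assume v: "v \<in> V" "x = {v}"
  show ?thesis using assms(2)
  proof (rule X_cases)
    fix w assume w: "w \<in> V" "y = {w}"
    show ?thesis using v w LM_vv[of v w] by (simp add: smat_one_def)
  next
    assume "y \<in> E" thus ?thesis using v LM_ve[of v y] sing_notE[of v] by (auto simp: smat_one_def)
  qed
next
  assume x: "x \<in> E"
  show ?thesis using assms(2)
  proof (rule X_cases)
    fix w assume w: "w \<in> V" "y = {w}"
    show ?thesis using x w LM_ev[of x w] sing_notE[of w] by (auto simp: smat_one_def)
  next
    assume "y \<in> E" thus ?thesis using x LM_ee[of x y] by (simp add: smat_one_def)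
  qed
qed

end

lemma L_sym: "(connection_matrix::('v,'a::comm_ring_1) smat) x y = connection_matrix y x"
  by (simp add: connection_matrix_def Int_commute)

lemma D_sym: "(Dm::('v,'a::comm_ring_1) smat) x y = Dm y x"
  by (simp add: Dm_def smat_add_def smat_transpose_def add.commute)

lemma H_sym: "(signless_hodge X::('v,'a::comm_ring_1) smat) x y = signless_hodge X y x"
  unfolding hodge_eq smat_mult_def by (rule sum.cong) (auto simp: D_sym mult.commute)

lemma M_sym: "(Mm X::('v,'a::comm_ring_1) smat) x y = Mm X y x"
  unfolding Mm_def by (simp add: L_sym H_sym)

lemma mult_sym: "(\<And>x y. A x y = A y x) \<Longrightarrow> (\<And>x y. B x y = B y x) \<Longrightarrow>
   smat_mult X A B x y = (smat_mult X B A y x :: 'a::comm_ring_1)"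
  unfolding smat_mult_def by (rule sum.cong) (auto simp: mult.commute)

lemma apply_comp: assumes "finite X" "\<psi> \<in> X \<rightarrow>\<^sub>E (UNIV::'a set)"
    "\<And>x y. x \<in> X \<Longrightarrow> y \<in> X \<Longrightarrow> smat_mult X A B x y = (smat_one x y :: 'a::comm_ring_1)"
  shows "smat_apply X A (smat_apply X B \<psi>) = \<psi>"
proof
  fix x
  show "smat_apply X A (smat_apply X B \<psi>) x = \<psi> x"
  proof (cases "x \<in> X")
    case False thus ?thesis using assms(2) by (auto simp: smat_apply_def PiE_def extensional_def)
  next
    case True
    have "smat_apply X A (smat_apply X B \<psi>) x = (\<Sum>y\<in>X. A x y * (\<Sum>z\<in>X. B y z * \<psi> z))"
      using True by (auto simp: smat_apply_def intro!: sum.cong)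
    also have "\<dots> = (\<Sum>z\<in>X. smat_mult X A B x z * \<psi> z)"
      unfolding smat_mult_def sum_distrib_left sum_distrib_right
      by (subst sum.swap) (simp add: mult.assoc)
    also have "\<dots> = (\<Sum>z\<in>X. if z = x then \<psi> x else 0)"
      using True by (auto simp: assms(3) smat_one_def intro!: sum.cong)
    also have "\<dots> = \<psi> x" using True assms(1) by simp
    finally show ?thesis .
  qed
qed

lemma apply_in: "smat_apply X A \<psi> \<in> X \<rightarrow>\<^sub>E (UNIV::'a::comm_ring_1 set)"
  by (simp add: smat_apply_def)

theorem mainTheorem7:
  fixes V :: "'v set" and E :: "'v set set"
  assumes "simple_graph V E"
  defines "X \<equiv> simplices V E"
  defines "L \<equiv> (connection_matrix :: ('v, 'f::{field,finite}) smat)"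
  shows "(\<exists>Linv. smat_inverse_on X L Linv
           \<and> (\<forall>x\<in>X. \<forall>y\<in>X. (signless_hodge X :: ('v,'f) smat) x y = L x y - Linv x y))
         \<and> bij_betw (smat_apply X L) (X \<rightarrow>\<^sub>E (UNIV :: 'f set)) (X \<rightarrow>\<^sub>E (UNIV :: 'f set))"
proof -
  have finX: "finite X" unfolding X_def using sumX[OF assms(1), of "\<lambda>_. (1::nat)"]
    finV[OF assms(1)] finE[OF assms(1)] by (auto simp: simplices_def)
  have LM: "\<And>x y. x \<in> X \<Longrightarrow> y \<in> X \<Longrightarrow> smat_mult X L (Mm X) x y = smat_one x y"
    unfolding X_def L_def using LM[OF assms(1)] by blast
  have MLx: "\<And>x y. x \<in> X \<Longrightarrow> y \<in> X \<Longrightarrow> smat_mult X (Mm X) L x y = smat_one x y"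
  proof -
    fix x y assume xy: "x \<in> X" "y \<in> X"
    have "smat_mult X (Mm X) L x y = smat_mult X L (Mm X) y x"
      unfolding L_def by (rule mult_sym) (auto intro: M_sym L_sym)
    also have "\<dots> = smat_one y x" using LM xy by blast
    finally show "smat_mult X (Mm X) L x y = smat_one x y" by (auto simp: smat_one_def)
  qed
  have inv: "smat_inverse_on X L (Mm X)" using LM MLx by (simp add: smat_inverse_on_def)
  have hod: "\<forall>x\<in>X. \<forall>y\<in>X. (signless_hodge X :: ('v,'f) smat) x y = L x y - Mm X x y"
    by (simp add: Mm_def L_def)
  have bij: "bij_betw (smat_apply X L) (X \<rightarrow>\<^sub>E (UNIV :: 'f set)) (X \<rightarrow>\<^sub>E (UNIV :: 'f set))"
  proof (rule bij_betw_byWitness[where f'="smat_apply X (Mm X)"])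
    show "\<forall>a\<in>X \<rightarrow>\<^sub>E UNIV. smat_apply X (Mm X) (smat_apply X L a) = a"
      using apply_comp[OF finX _ MLx] by blast
    show "\<forall>a\<in>X \<rightarrow>\<^sub>E UNIV. smat_apply X L (smat_apply X (Mm X) a) = a"
      using apply_comp[OF finX _ LM] by blast
  qed (auto simp: smat_apply_def)
  show ?thesis using inv hod bij by blast
qed

end
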